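(* Let $\{\mathcal G,(\Gamma_0,\Gamma_1),(\widetilde\Gamma_0,\widetilde\Gamma_1)\}$ be a triple for the adjoint pair $\{S,\widetilde S\}$ satisfying (G), (D), (M), and assume $\rho(A_0)\neq\emptyset$ (equivalently $\rho(\widetilde A_0)\neq\emptyset$). Let $\gamma,\widetilde\gamma$ be the associated $\gamma$-fields. Then for all $\lambda\in\rho(A_0)$ and $\mu\in\rho(\widetilde A_0)$: (i) $\gamma(\lambda)$ and $\widetilde\gamma(\mu)$ are bounded operators from $\mathcal G$ to $\mathfrak H$ with dense domains $\operatorname{dom}\gamma(\lambda)=\operatorname{ran}\Gamma_0$, $\operatorname{dom}\widetilde\gamma(\mu)=\operatorname{ran}\widetilde\Gamma_0$, and $\operatorname{ran}\gamma(\lambda)=\ker(T-\lambda)$, $\operatorname{ran}\widetilde\gamma(\mu)=\ker(\widetilde T-\mu)$; (ii) for $\varphi\in\operatorname{ran}\Gamma_0$ and $\psi\in\operatorname{ran}\widetilde\Gamma_0$ the functions $\lambda\mapsto\gamma(\lambda)\varphi$ and $\mu\mapsto\widetilde\gamma(\mu)\psi$ are holomorphic on $\rho(A_0)$ and $\rho(\widetilde A_0)$, respectively, and $\gamma(\lambda)=(I+(\lambda-\nu)(A_0-\lambda)^{-1})\gamma(\nu)$ for $\lambda,\nu\in\rho(A_0)$, $\widetilde\gamma(\mu)=(I+(\mu-\omega)(\widetilde A_0-\mu)^{-1})\widetilde\gamma(\omega)$ for $\mu,\omega\in\rho(\widetilde A_0)$; (iii) $\gamma(\lambda)^*$ and $\widetilde\gamma(\mu)^*$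 are everywhere defined bounded operators from $\mathfrak H$ to $\mathcal G$ with $\gamma(\lambda)^*f=\widetilde\Gamma_1(\widetilde A_0-\overline\lambda)^{-1}f$ and $\widetilde\gamma(\mu)^*g=\Gamma_1(A_0-\overline\mu)^{-1}g$ for all $f,g\in\mathfrak H$; in particular $\operatorname{ran}\gamma(\lambda)^*\subset\operatorname{ran}\widetilde\Gamma_1$ and $\operatorname{ran}\widetilde\gamma(\mu)^*\subset\operatorname{ran}\Gamma_1$.
   Context: Let $\mathfrak H$ be a separable Hilbert space. An adjoint pair $\{S,\widetilde S\}$ consists of densely defined closed operators $S,\widetilde S$ in $\mathfrak H$ with $(Sf,g)=(f,\widetilde Sg)$ for all $f\in\operatorname{dom}S$, $g\in\operatorname{dom}\widetilde S$. Fix operators $T\subset S^*$ and $\widetilde T\subset\widetilde S^*$ which are cores, i.e. $\overline T=S^*$ and $\overline{\widetilde T}=\widetilde S^*$. A triple $\{\mathcal G,(\Gamma_0,\Gamma_1),(\widetilde\Gamma_0,\widetilde\Gamma_1)\}$ for $\{S,\widetilde S\}$ consists of a Hilbert space $\mathcal G$ and linear maps $\Gamma_0,\Gamma_1:\operatorname{dom}T\to\mathcal G$, $\widetilde\Gamma_0,\widetilde\Gamma_1:\operatorname{dom}\widetilde T\to\mathcal G$. Put $A_0:=T\upharpoonright\ker\Gamma_0$ and $\widetilde A_0:=\widetilde T\upharpoonright\ker\widetilde\Gamma_0$. Conditions: (G) $(Tf,g)_{\mathfrak H}-(f,\widetilde Tg)_{\mathfrak H}=(\Gamma_1f,\widetilde\Gamma_0g)_{\mathcal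 G}-(\Gamma_0f,\widetilde\Gamma_1g)_{\mathcal G}$ for all $f\in\operatorname{dom}T$, $g\in\operatorname{dom}\widetilde T$; (D) $\operatorname{ran}\Gamma_0$ and $\operatorname{ran}\widetilde\Gamma_0$ are dense in $\mathcal G$; (M) $A_0^*=\widetilde A_0$ and $\widetilde A_0^*=A_0$. For $\lambda\in\rho(A_0)$ one has $\operatorname{dom}T=\ker\Gamma_0\dotplus\ker(T-\lambda)$, so $\Gamma_0\upharpoonright\ker(T-\lambda)$ is injective with range $\operatorname{ran}\Gamma_0$; similarly for $\widetilde T$. The $\gamma$-fields are $\gamma(\lambda):=(\Gamma_0\upharpoonright\ker(T-\lambda))^{-1}$, $\lambda\in\rho(A_0)$, and $\widetilde\gamma(\mu):=(\widetilde\Gamma_0\upharpoonright\ker(\widetilde T-\mu))^{-1}$, $\mu\in\rho(\widetilde A_0)$. *)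

theory Defs
  imports "HOL-Analysis.Analysis"
begin

text \<open>HOL-Analysis only provides real inner product spaces, so complex
inner product spaces (inner product linear in the first argument, conjugate
linear in the second) are introduced as a type class.  A complex Hilbert space
is a type of sort cinner_space and complete_space.\<close>

class cinner_space = real_normed_vector +
  fixes scaleC :: "complex \<Rightarrow> 'a \<Rightarrow> 'a"
  fixes cinner :: "'a \<Rightarrow> 'a \<Rightarrow> complex"
  assumes scaleC_add_right: "scaleC a (x + y) = scaleC a x + scaleC a y"
  and scaleC_add_left: "scaleC (a + b) x = scaleC a x + scaleC b x"
  and scaleC_scaleC: "scaleC a (scaleC b x) = scaleC (a * b) x"
  and scaleC_one: "scaleC 1 x = x"
  and scaleR_scaleC: "scaleR r x = scaleC (complex_of_real r) x"
  and cinner_commute: "cinner x y = cnj (cinner y x)"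
  and cinner_add_left: "cinner (x + y) z = cinner x z + cinner y z"
  and cinner_scaleC_left: "cinner (scaleC a x) y = a * cinner x y"
  and cinner_self_real: "Im (cinner x x) = 0"
  and cinner_self_nonneg: "0 \<le> Re (cinner x x)"
  and cinner_self_eq_zero: "cinner x x = 0 \<longleftrightarrow> x = 0"
  and norm_eq_sqrt_cinner: "norm x = sqrt (Re (cinner x x))"

instantiation complex :: cinner_space
begin
definition scaleC_complex :: "complex \<Rightarrow> complex \<Rightarrow> complex" where
  "scaleC_complex a x = a * x"
definition cinner_complex :: "complex \<Rightarrow> complex \<Rightarrow> complex" where
  "cinner_complex x y = x * cnj y"
instance
proof
  fix a b x y z :: complex and r :: real
  show "scaleC a (x + y) = scaleC a x + scaleC a y"
    by (simp add: scaleC_complex_def algebra_simps)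
  show "scaleC (a + b) x = scaleC a x + scaleC b x"
    by (simp add: scaleC_complex_def algebra_simps)
  show "scaleC a (scaleC b x) = scaleC (a * b) x"
    by (simp add: scaleC_complex_def algebra_simps)
  show "scaleC 1 x = x" by (simp add: scaleC_complex_def)
  show "scaleR r x = scaleC (complex_of_real r) x"
    by (simp add: scaleC_complex_def scaleR_conv_of_real)
  show "cinner x y = cnj (cinner y x)" by (simp add: cinner_complex_def)
  show "cinner (x + y) z = cinner x z + cinner y z"
    by (simp add: cinner_complex_def algebra_simps)
  show "cinner (scaleC a x) y = a * cinner x y"
    by (simp add: cinner_complex_def scaleC_complex_def)
  show "Im (cinner x x) = 0" by (simp add: cinner_complex_def)
  show "0 \<le> Re (cinner x x)" by (simp add: cinner_complex_def)
  show "(cinner x x = 0) = (x = 0)" by (simp add: cinner_complex_def)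
  show "norm x = sqrt (Re (cinner x x))"
    by (simp add: cinner_complex_def complex_mult_cnj cmod_def power2_eq_square)
qed
end

text \<open>A (possibly unbounded) linear operator from 'a to 'b is represented by its
graph, a set of pairs.  Domain A and Range A are the domain and range.\<close>

definition is_op :: "('a::cinner_space \<times> 'b::cinner_space) set \<Rightarrow> bool" where
  "is_op A \<longleftrightarrow> (0, 0) \<in> A
     \<and> (\<forall>x y u v. (x, y) \<in> A \<longrightarrow> (u, v) \<in> A \<longrightarrow> (x + u, y + v) \<in> A)
     \<and> (\<forall>c x y. (x, y) \<in> A \<longrightarrow> (scaleC c x, scaleC c y) \<in> A)
     \<and> (\<forall>y. (0, y) \<in> A \<longrightarrow> y = 0)"

definition op_app :: "('a \<times> 'b) set \<Rightarrow> 'a \<Rightarrow> 'b" where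
  "op_app A x = (THE y. (x, y) \<in> A)"

definition bounded_op :: "('a::cinner_space \<times> 'b::cinner_space) set \<Rightarrow> bool" where
  "bounded_op A \<longleftrightarrow> (\<exists>C. \<forall>x y. (x, y) \<in> A \<longrightarrow> norm y \<le> C * norm x)"

definition densely_defined :: "('a::cinner_space \<times> 'b) set \<Rightarrow> bool" where
  "densely_defined A \<longleftrightarrow> closure (Domain A) = UNIV"

definition closed_op :: "('a::cinner_space \<times> 'b::cinner_space) set \<Rightarrow> bool" where
  "closed_op A \<longleftrightarrow> closed A"

definition adj :: "('a::cinner_space \<times> 'b::cinner_space) set \<Rightarrow> ('b \<times> 'a) set" where
  "adj A = {(y, w). \<forall>x z. (x, z) \<in> A \<longrightarrow> cinner z y = cinner x w}"

definition shift_op :: "('a::cinner_space \<times> 'a) set \<Rightarrow> complex \<Rightarrow> ('a \<times> 'a) set" where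
  "shift_op A l = {(x, y - scaleC l x) | x y. (x, y) \<in> A}"

definition op_ker :: "('a \<times> 'b::zero) set \<Rightarrow> 'a set" where
  "op_ker A = {x. (x, 0) \<in> A}"

definition resolvent_set :: "('a::cinner_space \<times> 'a) set \<Rightarrow> complex set" where
  "resolvent_set A = {l. (\<forall>x. (x, 0) \<in> shift_op A l \<longrightarrow> x = 0)
                         \<and> Range (shift_op A l) = UNIV
                         \<and> (\<exists>C. \<forall>x y. (x, y) \<in> shift_op A l \<longrightarrow> norm x \<le> C * norm y)}"

definition resolvent :: "('a::cinner_space \<times> 'a) set \<Rightarrow> complex \<Rightarrow> 'a \<Rightarrow> 'a" where
  "resolvent A l y = (THE x. (x, y) \<in> shift_op A l)"

definition clinear_on :: "'a::cinner_space set \<Rightarrow> ('a \<Rightarrow> 'b::cinner_space) \<Rightarrow> bool" where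
  "clinear_on D f \<longleftrightarrow> (\<forall>x\<in>D. \<forall>y\<in>D. f (x + y) = f x + f y)
                     \<and> (\<forall>c. \<forall>x\<in>D. f (scaleC c x) = scaleC c (f x))"

text \<open>gamma-field: gamma(\<lambda>) = (Gamma0 restricted to ker(T - \<lambda>))^{-1}, as a graph.\<close>
definition gamma_field ::
  "('a::cinner_space \<times> 'a) set \<Rightarrow> ('a \<Rightarrow> 'g::cinner_space) \<Rightarrow> complex \<Rightarrow> ('g \<times> 'a) set" where
  "gamma_field T G0 l = {(G0 f, f) | f. f \<in> op_ker (shift_op T l)}"

definition vholomorphic_on :: "(complex \<Rightarrow> 'a::cinner_space) \<Rightarrow> complex set \<Rightarrow> bool" where
  "vholomorphic_on f S \<longleftrightarrow>
     (\<forall>z\<in>S. \<exists>v. ((\<lambda>w. scaleC (inverse (w - z)) (f w - f z)) \<longlongrightarrow> v) (at z))"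

end

theory Submission
  imports Defs
begin

lemma cinner_zero_left[simp]: "cinner 0 x = 0"
proof -
  have "cinner 0 x + cinner 0 x = cinner 0 x + 0" by (metis cinner_add_left add_0 add.right_neutral)
  then show ?thesis by (metis add_left_cancel)
qed
lemma cinner_zero_right[simp]: "cinner x 0 = 0"
  by (metis cinner_commute cinner_zero_left complex_cnj_zero)
lemma cinner_add_right: "cinner x (y+z) = cinner x y + cinner x z"
  by (metis cinner_commute cinner_add_left complex_cnj_add)
lemma cinner_scaleC_right: "cinner x (scaleC a y) = cnj a * cinner x y"
  by (metis cinner_commute cinner_scaleC_left complex_cnj_mult)
lemma cinner_minus_left: "cinner (-x) y = - cinner x y"
proof -
  have "cinner x y + cinner (-x) y = 0" by (metis cinner_add_left cinner_zero_left add.right_inverse)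
  then show ?thesis by (metis minus_unique)
qed
lemma cinner_minus_right: "cinner x (-y) = - cinner x y"
  by (metis cinner_commute cinner_minus_left complex_cnj_minus)
lemma cinner_diff_left: "cinner (x - y) z = cinner x z - cinner y z"
  by (metis cinner_add_left cinner_minus_left diff_conv_add_uminus)
lemma cinner_diff_right: "cinner x (y - z) = cinner x y - cinner x z"
  by (metis cinner_add_right cinner_minus_right diff_conv_add_uminus)
lemma scaleC_zero_right[simp]: "scaleC a 0 = 0"
proof -
  have "scaleC a 0 + scaleC a 0 = scaleC a 0 + 0" by (metis scaleC_add_right add_0 add.right_neutral)
  then show ?thesis by (metis add_left_cancel)
qed
lemma scaleC_zero_left[simp]: "scaleC 0 x = 0"
proof -
  have "scaleC 0 x + scaleC 0 x = scaleC 0 x + 0" by (metis scaleC_add_left add_0 add.right_neutral)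
  then show ?thesis by (metis add_left_cancel)
qed
lemma scaleC_minus_right: "scaleC a (-x) = - scaleC a x"
proof -
  have "scaleC a x + scaleC a (-x) = 0" by (metis scaleC_add_right scaleC_zero_right add.right_inverse)
  then show ?thesis by (metis minus_unique)
qed
lemma scaleC_minus_left: "scaleC (-a) x = - scaleC a x"
proof -
  have "scaleC a x + scaleC (-a) x = 0" by (metis scaleC_add_left scaleC_zero_left add.right_inverse)
  then show ?thesis by (metis minus_unique)
qed
lemma scaleC_diff_right: "scaleC a (x - y) = scaleC a x - scaleC a y"
  by (metis scaleC_add_right scaleC_minus_right diff_conv_add_uminus)
lemma scaleC_diff_left: "scaleC (a - b) x = scaleC a x - scaleC b x"
  by (metis scaleC_add_left scaleC_minus_left diff_conv_add_uminus)
lemma scaleC_one'[simp]: "scaleC 1 x = x" by (rule scaleC_one)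
lemma scaleC_neg1: "scaleC (-1) x = - x"
  by (simp add: scaleC_minus_left)

lemma cinner_self: "cinner x x = complex_of_real ((norm x)^2)"
proof -
  have "(norm x)^2 = Re (cinner x x)"
    using norm_eq_sqrt_cinner[of x] cinner_self_nonneg[of x] by simp
  then show ?thesis using cinner_self_real[of x] by (simp add: complex_eq_iff)
qed

lemma norm_scaleC: "norm (scaleC a x) = cmod a * norm x"
proof -
  have "complex_of_real ((norm (scaleC a x))^2) = a * cnj a * complex_of_real ((norm x)^2)"
    by (metis cinner_self cinner_scaleC_left cinner_scaleC_right mult.assoc mult.commute)
  also have "a * cnj a = complex_of_real ((cmod a)^2)" by (rule complex_norm_square[symmetric])
  finally have "(norm (scaleC a x))^2 = (cmod a * norm x)^2"
    by (metis of_real_eq_iff of_real_mult power_mult_distrib)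
  then show ?thesis by (simp add: power2_eq_iff_nonneg)
qed

lemma norm_diff_scaleC_sq:
  "complex_of_real ((norm (z - scaleC t m))^2) = complex_of_real ((norm z)^2)
     - cnj t * cinner z m - t * cnj (cinner z m) + t * cnj t * complex_of_real ((norm m)^2)"
  apply (simp only: cinner_self[symmetric] cinner_diff_left cinner_diff_right cinner_scaleC_left cinner_scaleC_right)
  apply (subst (2) cinner_commute)
  by (simp add: algebra_simps)

lemma Cauchy_Schwarz: "cmod (cinner x y) \<le> norm x * norm y"
proof (cases "y = 0")
  case True then show ?thesis by simp
next
  case False
  define a where "a = cinner x y"
  define n where "n = (norm y)^2"
  have n: "n > 0" using False by (simp add: n_def)
  define t where "t = a / complex_of_real n"
  have "complex_of_real ((norm (x - scaleC t y))^2) = complex_of_real ((norm x)^2) - a * cnj a / n"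
    unfolding norm_diff_scaleC_sq t_def a_def[symmetric] n_def[symmetric]
    using n by (simp add: field_simps power2_eq_square)
  also have "a * cnj a / n = complex_of_real ((cmod a)^2 / n)" by (simp only: complex_norm_square[symmetric] of_real_divide)
  finally have "(norm (x - scaleC t y))^2 = (norm x)^2 - (cmod a)^2 / n"
    by (metis of_real_diff of_real_eq_iff)
  then have "(cmod a)^2 / n \<le> (norm x)^2" by (metis diff_ge_0_iff_ge zero_le_power2)
  then have "(cmod a)^2 \<le> (norm x * norm y)^2" using n by (simp add: n_def field_simps power_mult_distrib)
  then show ?thesis unfolding a_def by (simp add: power2_le_iff_abs_le)
qed

lemma bounded_linear_cinner_right: "bounded_linear (\<lambda>y. cinner x y)"
proof
  show "cinner x (y + z) = cinner x y + cinner x z" for y z by (rule cinner_add_right)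
  show "cinner x (scaleR r y) = scaleR r (cinner x y)" for r y
    by (simp only: scaleR_scaleC[of r y] cinner_scaleC_right complex_cnj_complex_of_real scaleR_conv_of_real)
  show "\<exists>K. \<forall>y. norm (cinner x y) \<le> norm y * K"
    using Cauchy_Schwarz by (metis mult.commute norm_complex_def)
qed

lemma bounded_linear_cinner_left: "bounded_linear (\<lambda>x. cinner x y)"
proof
  show "cinner (x + z) y = cinner x y + cinner z y" for x z by (rule cinner_add_left)
  show "cinner (scaleR r x) y = scaleR r (cinner x y)" for r x
    by (simp only: scaleR_scaleC[of r x] cinner_scaleC_left scaleR_conv_of_real)
  show "\<exists>K. \<forall>x. norm (cinner x y) \<le> norm x * K"
    using Cauchy_Schwarz by (metis norm_complex_def)
qed

lemma bounded_linear_scaleC: "bounded_linear (\<lambda>x. scaleC c x)"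
proof
  show "scaleC c (x + z) = scaleC c x + scaleC c z" for x z by (rule scaleC_add_right)
  show "scaleC c (scaleR r x) = scaleR r (scaleC c x)" for r x
    by (simp add: scaleR_scaleC scaleC_scaleC mult.commute)
  show "\<exists>K. \<forall>x. norm (scaleC c x) \<le> norm x * K"
    by (metis norm_scaleC mult.commute order_refl)
qed

lemma cinner_ext_zero: "(\<And>y. cinner y x = 0) \<Longrightarrow> x = 0"
  using cinner_self_eq_zero by blast

lemma dense_orth_zero:
  assumes "closure D = UNIV" "\<And>d. d \<in> D \<Longrightarrow> cinner d x = 0"
  shows "x = 0"
proof -
  have cl: "closed {d. cinner d x = 0}"
    using bounded_linear_cinner_left[of x]
    by (intro closed_Collect_eq continuous_intros) (auto intro: linear_continuous_on bounded_linear.continuous_on)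
  have "D \<subseteq> {d. cinner d x = 0}" using assms(2) by auto
  then have "closure D \<subseteq> {d. cinner d x = 0}" using cl closure_minimal by blast
  then show ?thesis using assms(1) cinner_self_eq_zero by auto
qed

section \<open>Operators\<close>

lemma op_zero: "is_op A \<Longrightarrow> (0,0) \<in> A" unfolding is_op_def by blast
lemma op_add: "is_op A \<Longrightarrow> (x,y)\<in>A \<Longrightarrow> (u,v)\<in>A \<Longrightarrow> (x+u, y+v) \<in> A"
  unfolding is_op_def by blast
lemma op_scale: "is_op A \<Longrightarrow> (x,y)\<in>A \<Longrightarrow> (scaleC c x, scaleC c y) \<in> A"
  unfolding is_op_def by blast
lemma op_zero_fun: "is_op A \<Longrightarrow> (0,y)\<in>A \<Longrightarrow> y = 0"
  unfolding is_op_def by blast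
lemma op_minus: "is_op A \<Longrightarrow> (x,y)\<in>A \<Longrightarrow> (-x, -y) \<in> A"
  using op_scale[of A x y "-1"] by (simp add: scaleC_neg1)
lemma op_diff: "is_op A \<Longrightarrow> (x,y)\<in>A \<Longrightarrow> (u,v)\<in>A \<Longrightarrow> (x-u, y-v) \<in> A"
  using op_add[of A x y "-u" "-v"] op_minus[of A u v] by simp
lemma op_fun: "is_op A \<Longrightarrow> (x,y)\<in>A \<Longrightarrow> (x,y')\<in>A \<Longrightarrow> y = y'"
  using op_diff[of A x y x y'] op_zero_fun[of A "y - y'"] by simp
lemma op_app_eq: "is_op A \<Longrightarrow> (x,y)\<in>A \<Longrightarrow> op_app A x = y"
  unfolding op_app_def by (rule the_equality) (blast intro: op_fun[symmetric])+

lemma shift_op_iff: "(x, y) \<in> shift_op A l \<longleftrightarrow> (\<exists>z. (x,z)\<in>A \<and> y = z - scaleC l x)"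
  unfolding shift_op_def by auto

lemma is_op_shift: assumes "is_op A" shows "is_op (shift_op A l)"
  unfolding is_op_def shift_op_iff
proof (intro conjI allI impI)
  show "\<exists>z. (0, z) \<in> A \<and> 0 = z - scaleC l 0" using op_zero[OF assms] by auto
  fix x y u v
  assume "\<exists>z. (x, z) \<in> A \<and> y = z - scaleC l x" "\<exists>z. (u, z) \<in> A \<and> v = z - scaleC l u"
  then obtain z1 z2 where "(x,z1)\<in>A" "y = z1 - scaleC l x" "(u,z2)\<in>A" "v = z2 - scaleC l u" by blast
  then show "\<exists>z. (x + u, z) \<in> A \<and> y + v = z - scaleC l (x + u)"
  proof (intro exI[of _ "z1+z2"] conjI)
    show "(x + u, z1 + z2) \<in> A" by (rule op_add[OF assms \<open>(x,z1)\<in>A\<close> \<open>(u,z2)\<in>A\<close>])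
    show "y + v = z1 + z2 - scaleC l (x + u)"
      unfolding \<open>y = z1 - scaleC l x\<close> \<open>v = z2 - scaleC l u\<close> scaleC_add_right by simp
  qed
next
  fix c x y assume "\<exists>z. (x, z) \<in> A \<and> y = z - scaleC l x"
  then obtain z where "(x,z)\<in>A" "y = z - scaleC l x" by blast
  then show "\<exists>z. (scaleC c x, z) \<in> A \<and> scaleC c y = z - scaleC l (scaleC c x)"
    by (intro exI[of _ "scaleC c z"]) (auto simp: op_scale[OF assms] scaleC_diff_right scaleC_scaleC mult.commute)
next
  fix y assume "\<exists>z. (0, z) \<in> A \<and> y = z - scaleC l 0"
  then show "y = 0" using op_zero_fun[OF assms] by auto
qed

lemma shift_change: "(x,y) \<in> shift_op A w \<Longrightarrow> (x, y + scaleC (w - z) x) \<in> shift_op A z"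
  unfolding shift_op_iff by (auto simp: scaleC_diff_left)

lemma res_inj:
  assumes "is_op A" "l \<in> resolvent_set A" "(x1,y)\<in>shift_op A l" "(x2,y)\<in>shift_op A l"
  shows "x1 = x2"
proof -
  have "(x1 - x2, 0) \<in> shift_op A l" using op_diff[OF is_op_shift[OF assms(1)] assms(3,4)] by simp
  then show ?thesis using assms(2) unfolding resolvent_set_def by auto
qed

lemma res_eq:
  assumes "is_op A" "l \<in> resolvent_set A" "(x,y)\<in>shift_op A l"
  shows "resolvent A l y = x"
  unfolding resolvent_def
proof (rule the_equality)
  show "(x, y) \<in> shift_op A l" by (rule assms(3))
  fix x' assume "(x', y) \<in> shift_op A l"
  then show "x' = x" using res_inj[OF assms(1,2) _ assms(3)] by blast
qed

lemma res_in:
  assumes "is_op A" "l \<in> resolvent_set A"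
  shows "(resolvent A l y, y) \<in> shift_op A l"
proof -
  from assms(2) have "y \<in> Range (shift_op A l)" unfolding resolvent_set_def by auto
  then obtain x where "(x,y) \<in> shift_op A l" by blast
  then show ?thesis using res_eq[OF assms] by simp
qed

lemma res_A:
  assumes "is_op A" "l \<in> resolvent_set A"
  shows "(resolvent A l y, y + scaleC l (resolvent A l y)) \<in> A"
  using res_in[OF assms, of y] unfolding shift_op_iff by (metis diff_add_cancel)

lemma res_bound:
  assumes "is_op A" "l \<in> resolvent_set A"
  shows "\<exists>C>0. \<forall>y. norm (resolvent A l y) \<le> C * norm y"
proof -
  from assms(2) obtain C where C: "\<forall>x y. (x, y) \<in> shift_op A l \<longrightarrow> norm x \<le> C * norm y"
    unfolding resolvent_set_def by blast
  show ?thesis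
  proof (intro exI[of _ "max C 1"] conjI allI)
    fix y
    have "norm (resolvent A l y) \<le> C * norm y" using C res_in[OF assms] by blast
    also have "\<dots> \<le> max C 1 * norm y" by (simp add: mult_right_mono)
    finally show "norm (resolvent A l y) \<le> max C 1 * norm y" .
  qed auto
qed

lemma res_add:
  assumes "is_op A" "l \<in> resolvent_set A"
  shows "resolvent A l (y1 + y2) = resolvent A l y1 + resolvent A l y2"
  by (rule res_eq[OF assms op_add[OF is_op_shift[OF assms(1)] res_in[OF assms] res_in[OF assms]]])

lemma res_scale:
  assumes "is_op A" "l \<in> resolvent_set A"
  shows "resolvent A l (scaleC c y) = scaleC c (resolvent A l y)"
  by (rule res_eq[OF assms op_scale[OF is_op_shift[OF assms(1)] res_in[OF assms]]])

lemma res_diff: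
  assumes "is_op A" "l \<in> resolvent_set A"
  shows "resolvent A l (y1 - y2) = resolvent A l y1 - resolvent A l y2"
  by (rule res_eq[OF assms op_diff[OF is_op_shift[OF assms(1)] res_in[OF assms] res_in[OF assms]]])

lemma resolvent_near:
  fixes A :: "('a::{cinner_space,complete_space} \<times> 'a) set"
  assumes A: "is_op A" and z: "z \<in> resolvent_set A"
    and C: "\<And>y. norm (resolvent A z y) \<le> C * norm y" and Cpos: "C > 0"
    and wz: "cmod (w - z) * C \<le> 1/2"
  shows "w \<in> resolvent_set A \<and> (\<forall>y. norm (resolvent A w y) \<le> 2*C*norm y)"
proof -
  have bnd: "norm x \<le> 2*C*norm y" if "(x,y) \<in> shift_op A w" for x y
  proof -
    have "(x, y + scaleC (w - z) x) \<in> shift_op A z" using shift_change[OF that] .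
    then have "x = resolvent A z (y + scaleC (w - z) x)" using res_eq[OF A z] by simp
    then have "norm x \<le> C * norm (y + scaleC (w - z) x)" using C by metis
    also have "\<dots> \<le> C * norm y + C * (cmod (w - z) * norm x)"
      using norm_triangle_ineq[of y "scaleC (w - z) x"] Cpos by (simp add: norm_scaleC distrib_left[symmetric])
    also have "C * (cmod (w - z) * norm x) \<le> 1/2 * norm x"
      using wz mult_right_mono[OF wz norm_ge_zero[of x]] by (simp add: algebra_simps)
    finally show ?thesis by simp
  qed
  have surj: "y \<in> Range (shift_op A w)" for y
  proof -
    define f where "f v = y + scaleC (w - z) (resolvent A z v)" for v
    have "dist (f v1) (f v2) \<le> 1/2 * dist v1 v2" for v1 v2
    proof -
      have "f v1 - f v2 = scaleC (w - z) (resolvent A z (v1 - v2))"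
        by (simp add: f_def res_diff[OF A z] scaleC_diff_right)
      then have "dist (f v1) (f v2) = cmod (w - z) * norm (resolvent A z (v1 - v2))"
        by (simp add: dist_norm norm_scaleC)
      also have "\<dots> \<le> cmod (w - z) * (C * norm (v1 - v2))" using C by (simp add: mult_left_mono)
      also have "\<dots> \<le> 1/2 * dist v1 v2" using mult_right_mono[OF wz norm_ge_zero[of "v1 - v2"]]
        by (simp add: dist_norm algebra_simps)
      finally show ?thesis .
    qed
    then obtain v where v: "f v = v" using banach_fix_type[of "1/2" f] by auto
    define x where "x = resolvent A z v"
    have "(x, v) \<in> shift_op A z" unfolding x_def by (rule res_in[OF A z])
    then have "(x, v + scaleC (z - w) x) \<in> shift_op A w" by (rule shift_change)
    moreover have "v + scaleC (z - w) x = y"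
      using v unfolding f_def x_def[symmetric]
      by (metis add_diff_cancel_right' minus_diff_eq scaleC_minus_left diff_conv_add_uminus)
    ultimately show ?thesis by auto
  qed
  have inj: "x = 0" if "(x,0) \<in> shift_op A w" for x
    using bnd[OF that] by simp
  have w: "w \<in> resolvent_set A"
    unfolding resolvent_set_def using bnd surj inj by blast
  show ?thesis using w bnd res_in[OF A w] by blast
qed

lemma resolvent_identity:
  assumes A: "is_op A" and z: "z \<in> resolvent_set A" and w: "w \<in> resolvent_set A"
  shows "resolvent A w v - resolvent A z v = scaleC (w - z) (resolvent A z (resolvent A w v))"
proof -
  have "(resolvent A w v, v + scaleC (w - z) (resolvent A w v)) \<in> shift_op A z"
    by (rule shift_change[OF res_in[OF A w]])
  then have "resolvent A w v = resolvent A z (v + scaleC (w - z) (resolvent A w v))"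
    using res_eq[OF A z] by simp
  also have "\<dots> = resolvent A z v + scaleC (w - z) (resolvent A z (resolvent A w v))"
    by (simp add: res_add[OF A z] res_scale[OF A z])
  finally show ?thesis by (metis add_diff_cancel_left')
qed

section \<open>Adjoints and projection\<close>

lemma adj_iff: "(y,w) \<in> adj A \<longleftrightarrow> (\<forall>x z. (x,z)\<in>A \<longrightarrow> cinner z y = cinner x w)"
  unfolding adj_def by auto

lemma cont_cinner_r: "continuous_on UNIV f \<Longrightarrow> continuous_on UNIV (\<lambda>q. cinner x (f q))"
  by (rule bounded_linear.continuous_on[OF bounded_linear_cinner_right])
lemma cont_cinner_l: "continuous_on UNIV f \<Longrightarrow> continuous_on UNIV (\<lambda>q. cinner (f q) y)"
  by (rule bounded_linear.continuous_on[OF bounded_linear_cinner_left])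

lemma adj_closed:
  fixes A :: "('a::cinner_space \<times> 'b::cinner_space) set"
  shows "closed (adj A)"
proof -
  have "adj A = (\<Inter>p\<in>A. {q. cinner (snd p) (fst q) = cinner (fst p) (snd q)})"
    unfolding adj_def by (auto; metis fst_conv snd_conv)
  moreover have "closed {q::'b\<times>'a. cinner (snd p) (fst q) = cinner (fst p) (snd q)}" for p :: "'a \<times> 'b"
    by (intro closed_Collect_eq cont_cinner_r continuous_on_fst continuous_on_snd continuous_on_id)
  ultimately show ?thesis by auto
qed

lemma adj_is_op:
  fixes A :: "('a::cinner_space \<times> 'b::cinner_space) set"
  assumes "closure (Domain A) = UNIV"
  shows "is_op (adj A)"
proof -
  have 1: "(0,0) \<in> adj A" by (simp add: adj_iff)
  have 2: "(y+u, w+v) \<in> adj A" if "(y,w) \<in> adj A" "(u,v) \<in> adj A" for y w u v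
    using that by (simp add: adj_iff cinner_add_right)
  have 3: "(scaleC c y, scaleC c w) \<in> adj A" if "(y,w) \<in> adj A" for c y w
    using that by (simp add: adj_iff cinner_scaleC_right)
  have 4: "w = 0" if "(0,w) \<in> adj A" for w
  proof (rule dense_orth_zero[OF assms])
    fix d assume "d \<in> Domain A"
    then obtain z where "(d,z)\<in>A" by blast
    then show "cinner d w = 0" using that by (force simp: adj_iff)
  qed
  show ?thesis unfolding is_op_def using 1 2 3 4 by blast
qed

lemma norm_sq_Re: "(norm x)^2 = Re (cinner x x)"
  by (simp add: cinner_self)

lemma parallelogram: fixes a b :: "'a::cinner_space" shows "(norm (a - b))^2 + (norm (a + b))^2 = 2*(norm a)^2 + 2*(norm b)^2"
  unfolding norm_sq_Re
  by (simp add: cinner_add_left cinner_add_right cinner_diff_left cinner_diff_right)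

lemma orth_zero_UNIV:
  fixes M :: "'a::{cinner_space,complete_space} set"
  assumes cl: "closed M" and z: "0 \<in> M" and add: "\<And>x y. x\<in>M \<Longrightarrow> y\<in>M \<Longrightarrow> x+y \<in> M"
    and sc: "\<And>c x. x\<in>M \<Longrightarrow> scaleC c x \<in> M"
    and orth: "\<And>g. (\<And>m. m\<in>M \<Longrightarrow> cinner m g = 0) \<Longrightarrow> g = 0"
  shows "x \<in> M"
proof -
  let ?D = "(\<lambda>m. norm (x - m)) ` M"
  define d where "d = Inf ?D"
  have bdd: "bdd_below ?D" by (rule bdd_belowI[of _ 0]) auto
  have ne: "?D \<noteq> {}" using z by auto
  have d_le: "d \<le> norm (x - m)" if "m \<in> M" for m
    unfolding d_def using bdd that by (auto intro: cInf_lower)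
  have d_nn: "0 \<le> d" unfolding d_def using ne by (auto intro: cInf_greatest)
  define e where "e n = inverse (real (Suc n))" for n
  have e_pos: "e n > 0" for n by (simp add: e_def)
  have e_le1: "e n \<le> 1" for n by (simp add: e_def inverse_le_1_iff)
  have e_mono: "e n \<le> e N" if "N \<le> n" for n N using that by (simp add: e_def field_simps)
  have "\<exists>m\<in>M. norm (x - m) < d + e n" for n
  proof -
    have "Inf ?D < d + e n" unfolding d_def using e_pos[of n] by simp
    then obtain t where "t \<in> ?D" "t < d + e n" using cInf_lessD[OF ne] by blast
    then show ?thesis by auto
  qed
  then obtain s where s: "\<And>n. s n \<in> M" "\<And>n. norm (x - s n) < d + e n" by metis
  have key: "(norm (s n - s k))^2 \<le> 4*d*(e n + e k) + 2*(e n)^2 + 2*(e k)^2" for n k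
  proof -
    have mid: "scaleR (1/2) (s n + s k) \<in> M" using sc add s by (simp add: scaleR_scaleC)
    have eq: "(x - s n) + (x - s k) = scaleR 2 (x - scaleR (1/2) (s n + s k))"
      by (simp add: algebra_simps scaleR_2)
    have "2 * d \<le> norm ((x - s n) + (x - s k))"
      unfolding eq using d_le[OF mid] by simp
    then have q1: "(2*d)^2 \<le> (norm ((x - s n) + (x - s k)))^2"
      using d_nn power_mono[of "2*d" "norm ((x - s n) + (x - s k))" 2] by linarith
    have p: "(norm ((x - s n) - (x - s k)))^2 + (norm ((x-s n)+(x-s k)))^2
        = 2*(norm(x-s n))^2 + 2*(norm (x - s k))^2" by (rule parallelogram)
    have q2: "(norm (x - s n))^2 \<le> (d + e n)^2"
      using s(2)[of n] by (simp add: power_mono less_imp_le)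
    have q3: "(norm (x - s k))^2 \<le> (d + e k)^2"
      using s(2)[of k] by (simp add: power_mono less_imp_le)
    have "(x - s n) - (x - s k) = - (s n - s k)" by simp
    then have "(norm ((x - s n) - (x - s k)))^2 = (norm (s n - s k))^2" by (simp add: norm_minus_commute)
    then have "(norm (s n - s k))^2 \<le> 2*(d + e n)^2 + 2*(d + e k)^2 - (2*d)^2"
      using p q1 q2 q3 by linarith
    then show ?thesis by (simp add: power2_eq_square algebra_simps)
  qed
  have "Cauchy s"
    unfolding Cauchy_def
  proof (intro allI impI)
    fix \<epsilon> :: real assume ep: "\<epsilon> > 0"
    define \<delta> where "\<delta> = min 1 (\<epsilon>^2 / (8*d+8))"
    have dpos: "\<delta> > 0" using ep d_nn by (simp add: \<delta>_def)
    obtain N where N: "inverse (real (Suc N)) < \<delta>" using reals_Archimedean[OF dpos] by blast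
    show "\<exists>M. \<forall>m\<ge>M. \<forall>n\<ge>M. dist (s m) (s n) < \<epsilon>"
    proof (intro exI allI impI)
      fix m n assume mn: "N \<le> m" "N \<le> n"
      have em: "e m < \<delta>" "e n < \<delta>" using e_mono[OF mn(1)] e_mono[OF mn(2)] N unfolding e_def[symmetric] by linarith+
      have d1: "\<delta> \<le> 1" by (simp add: \<delta>_def)
      have sq: "(e m)^2 \<le> \<delta>" "(e n)^2 \<le> \<delta>"
        using em mult_left_le[OF e_le1[of m] less_imp_le[OF e_pos[of m]]]
          mult_left_le[OF e_le1[of n] less_imp_le[OF e_pos[of n]]] by (auto simp: power2_eq_square)
      have "(norm (s m - s n))^2 \<le> 4*d*(e m + e n) + 2*(e m)^2 + 2*(e n)^2" by (rule key)
      also have "\<dots> \<le> 4*d*(2*\<delta>) + 2*\<delta> + 2*\<delta>"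
        using em sq d_nn by (intro add_mono mult_left_mono) auto
      also have "\<dots> = (8*d+4)*\<delta>" by (simp add: algebra_simps)
      also have "\<dots> < \<epsilon>^2"
      proof -
        have "\<delta> \<le> \<epsilon>^2 / (8*d+8)" by (simp add: \<delta>_def)
        then have "(8*d+8) * \<delta> \<le> \<epsilon>^2" using d_nn by (simp add: field_simps)
        moreover have "(8*d+4)*\<delta> < (8*d+8)*\<delta>" using dpos by (intro mult_strict_right_mono) auto
        ultimately show ?thesis by linarith
      qed
      finally have "(norm (s m - s n))^2 < \<epsilon>^2" .
      then show "dist (s m) (s n) < \<epsilon>"
        using ep by (simp add: dist_norm power2_less_imp_less)
    qed
  qed
  then obtain p where p: "s \<longlonglongrightarrow> p" using Cauchy_convergent_iff convergent_def by blast
  have pM: "p \<in> M" using closed_sequentially[OF cl s(1) p] .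
  have "norm (x - p) \<le> d"
  proof (rule LIMSEQ_le)
    show "(\<lambda>n. norm (x - s n)) \<longlonglongrightarrow> norm (x - p)" by (intro tendsto_intros p)
    show "(\<lambda>n. d + e n) \<longlonglongrightarrow> d" unfolding e_def
      using tendsto_add[OF tendsto_const LIMSEQ_inverse_real_of_nat, of d] by simp
    show "\<exists>N. \<forall>n\<ge>N. norm (x - s n) \<le> d + e n" using s(2) less_imp_le by blast
  qed
  define zz where "zz = x - p"
  have var: "cinner zz m = 0" if mM: "m \<in> M" for m
  proof (rule ccontr)
    define a where "a = cinner zz m"
    assume "cinner zz m \<noteq> 0"
    then have apos: "cmod a > 0" by (simp add: a_def)
    define A where "A = (cmod a)^2"
    define n where "n = (norm m)^2"
    define N where "N = n + 1"
    have Npos: "N > 0" by (simp add: N_def n_def add_nonneg_pos)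
    define t where "t = a / complex_of_real N"
    have an: "a * cnj a = complex_of_real A" unfolding A_def by (rule complex_norm_square[symmetric])
    have c1: "cnj t * a = complex_of_real (A / N)"
    proof -
      have "cnj t * a = (a * cnj a) / complex_of_real N" unfolding t_def by (simp add: field_simps)
      then show ?thesis by (simp add: an)
    qed
    have c2: "t * cnj a = complex_of_real (A / N)"
    proof -
      have "t * cnj a = (a * cnj a) / complex_of_real N" unfolding t_def by (simp add: field_simps)
      then show ?thesis by (simp add: an)
    qed
    have c3: "t * cnj t = complex_of_real (A / N^2)"
    proof -
      have "t * cnj t = (a * cnj a) / (complex_of_real N)^2" unfolding t_def by (simp add: field_simps power2_eq_square)
      then show ?thesis by (simp add: an)
    qed
    have "complex_of_real ((norm (zz - scaleC t m))^2)
        = complex_of_real ((norm zz)^2 - A/N - A/N + A/N^2 * n)"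
      unfolding norm_diff_scaleC_sq a_def[symmetric] c1 c2 n_def[symmetric]
      by (simp add: mult.assoc[symmetric] c3)
    then have e1: "(norm (zz - scaleC t m))^2 = (norm zz)^2 - 2*A/N + A/N^2 * n"
      by (simp only: of_real_eq_iff)
    have Ap: "A/N > 0" using apos Npos by (simp add: A_def)
    have "A/N^2 * n < A/N"
    proof -
      have "n/N < 1" using Npos by (simp add: N_def)
      then have "(A/N) * (n/N) < (A/N) * 1" using Ap by (intro mult_strict_left_mono) auto
      then show ?thesis by (simp add: power2_eq_square)
    qed
    moreover have "2*A/N = 2*(A/N)" by simp
    ultimately have lt: "(norm (zz - scaleC t m))^2 < (norm zz)^2" using e1 Ap by linarith
    have "p + scaleC t m \<in> M" using add[OF pM sc[OF mM]] .
    then have "d \<le> norm (x - (p + scaleC t m))" by (rule d_le)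
    also have "x - (p + scaleC t m) = zz - scaleC t m" by (simp add: zz_def)
    finally have "d^2 \<le> (norm (zz - scaleC t m))^2" using d_nn by (simp add: power_mono)
    moreover have "(norm zz)^2 \<le> d^2" using \<open>norm (x - p) \<le> d\<close> by (simp add: zz_def power_mono)
    ultimately show False using lt by linarith
  qed
  have "zz = 0"
  proof (rule orth)
    fix m assume "m \<in> M"
    then show "cinner m zz = 0" using var by (metis cinner_commute complex_cnj_zero)
  qed
  then show ?thesis using pM by (simp add: zz_def)
qed

lemma resolvent_adj:
  fixes A B :: "('a::{cinner_space,complete_space} \<times> 'a) set"
  assumes A: "is_op A" and B: "is_op B" and AB: "adj A = B" and BA: "adj B = A"
    and l: "l \<in> resolvent_set A"
  shows "cnj l \<in> resolvent_set B"
proof -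
  obtain C where Cpos: "C > 0" and C: "\<And>y. norm (resolvent A l y) \<le> C * norm y"
    using res_bound[OF A l] by blast
  have key: "cinner y k = cinner (resolvent A l y) (m - scaleC (cnj l) k)" if "(k,m) \<in> B" for y k m
  proof -
    let ?x = "resolvent A l y"
    have "(?x, y + scaleC l ?x) \<in> A" by (rule res_A[OF A l])
    then have "cinner (y + scaleC l ?x) k = cinner ?x m" using that AB by (auto simp: adj_iff)
    then have "cinner y k + l * cinner ?x k = cinner ?x m" by (simp add: cinner_add_left cinner_scaleC_left)
    then show ?thesis by (simp add: cinner_diff_right cinner_scaleC_right algebra_simps)
  qed
  have bnd: "norm k \<le> C * norm g" if kg: "(k,g) \<in> shift_op B (cnj l)" for k g
  proof -
    obtain m where km: "(k,m)\<in>B" "g = m - scaleC (cnj l) k" using kg unfolding shift_op_iff by blast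
    have "complex_of_real ((norm k)^2) = cinner (resolvent A l k) g"
      using key[OF km(1), of k] km(2) by (simp add: cinner_self)
    then have "(norm k)^2 = cmod (cinner (resolvent A l k) g)"
      by (metis norm_of_real abs_of_nonneg zero_le_power2)
    also have "\<dots> \<le> norm (resolvent A l k) * norm g" by (rule Cauchy_Schwarz)
    also have "\<dots> \<le> C * norm k * norm g" using C by (simp add: mult_right_mono)
    finally have le: "norm k * norm k \<le> norm k * (C * norm g)" by (simp add: power2_eq_square algebra_simps)
    show ?thesis
    proof (cases "norm k = 0")
      case True then show ?thesis using Cpos by simp
    next
      case False then have "norm k > 0" by simp
      then show ?thesis using le by (simp add: mult_le_cancel_left)
    qed
  qed
  define M where "M = Range (shift_op B (cnj l))"
  have SB: "is_op (shift_op B (cnj l))" by (rule is_op_shift[OF B])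
  have Bcl: "closed B" using adj_closed AB by metis
  have Mcl: "closed M"
    unfolding closed_sequential_limits
  proof (intro allI impI, elim conjE)
    fix s g assume s: "\<forall>n. s n \<in> M" and lim: "s \<longlonglongrightarrow> g"
    have "\<forall>n. \<exists>k. (k, s n) \<in> shift_op B (cnj l)" using s unfolding M_def by blast
    then obtain k where k: "\<And>n. (k n, s n) \<in> shift_op B (cnj l)" by metis
    have "Cauchy k"
      unfolding Cauchy_def
    proof (intro allI impI)
      fix e::real assume e: "e > 0"
      have "Cauchy s" using lim by (rule LIMSEQ_imp_Cauchy)
      moreover have "e / C > 0" using e Cpos by simp
      ultimately obtain N where N: "\<forall>m\<ge>N. \<forall>n\<ge>N. dist (s m) (s n) < e / C"
        unfolding Cauchy_def by blast
      show "\<exists>N. \<forall>m\<ge>N. \<forall>n\<ge>N. dist (k m) (k n) < e"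
      proof (intro exI allI impI)
        fix m n assume mn: "N \<le> m" "N \<le> n"
        have "(k m - k n, s m - s n) \<in> shift_op B (cnj l)" using op_diff[OF SB k k] .
        then have "norm (k m - k n) \<le> C * norm (s m - s n)" by (rule bnd)
        also have "\<dots> < C * (e / C)"
          using N mn Cpos by (intro mult_strict_left_mono) (auto simp: dist_norm)
        finally show "dist (k m) (k n) < e" using Cpos by (simp add: dist_norm)
      qed
    qed
    then obtain k0 where k0: "k \<longlonglongrightarrow> k0" using Cauchy_convergent_iff convergent_def by blast
    have kB: "(k n, s n + scaleC (cnj l) (k n)) \<in> B" for n
      using k[of n] unfolding shift_op_iff by (metis diff_add_cancel)
    have "(\<lambda>n. (k n, s n + scaleC (cnj l) (k n))) \<longlonglongrightarrow> (k0, g + scaleC (cnj l) k0)"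
      by (intro tendsto_Pair tendsto_add lim k0 bounded_linear.tendsto[OF bounded_linear_scaleC])
    then have "(k0, g + scaleC (cnj l) k0) \<in> B"
      by (rule closed_sequentially[OF Bcl, of "\<lambda>n. (k n, s n + scaleC (cnj l) (k n))", OF kB])
    then have "(k0, g) \<in> shift_op B (cnj l)" unfolding shift_op_iff by force
    then show "g \<in> M" unfolding M_def by blast
  qed
  have Mall: "g \<in> M" for g
  proof (rule orth_zero_UNIV[OF Mcl])
    show "0 \<in> M" using op_zero[OF SB] M_def by blast
    show "x + y \<in> M" if "x\<in>M" "y\<in>M" for x y using that op_add[OF SB] unfolding M_def by blast
    show "scaleC c x \<in> M" if "x \<in> M" for c x using that op_scale[OF SB] unfolding M_def by blast
    fix h assume h: "\<And>m. m \<in> M \<Longrightarrow> cinner m h = 0"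
    have "(h, scaleC l h) \<in> adj B"
      unfolding adj_iff
    proof (intro allI impI)
      fix k m assume km: "(k,m) \<in> B"
      have "(k, m - scaleC (cnj l) k) \<in> shift_op B (cnj l)" using km unfolding shift_op_iff by blast
      then have "cinner (m - scaleC (cnj l) k) h = 0" using h M_def by blast
      then show "cinner m h = cinner k (scaleC l h)"
        by (simp add: cinner_diff_left cinner_scaleC_left cinner_scaleC_right)
    qed
    then have "(h, scaleC l h) \<in> A" using BA by simp
    then have "(h, 0) \<in> shift_op A l" unfolding shift_op_iff by force
    then have "resolvent A l 0 = h" by (rule res_eq[OF A l])
    moreover have "resolvent A l 0 = 0" using res_eq[OF A l op_zero[OF is_op_shift[OF A]]] .
    ultimately show "h = 0" by simp
  qed
  have 1: "\<forall>x. (x, 0) \<in> shift_op B (cnj l) \<longrightarrow> x = 0" using bnd by force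
  have 2: "Range (shift_op B (cnj l)) = UNIV" using Mall M_def by blast
  have 3: "\<exists>C. \<forall>x y. (x,y) \<in> shift_op B (cnj l) \<longrightarrow> norm x \<le> C * norm y" using bnd by blast
  show ?thesis unfolding resolvent_set_def using 1 2 3 by blast
qed

lemma dom_add: "is_op T \<Longrightarrow> x \<in> Domain T \<Longrightarrow> y \<in> Domain T \<Longrightarrow> x + y \<in> Domain T"
  using op_add by blast
lemma dom_scale: "is_op T \<Longrightarrow> x \<in> Domain T \<Longrightarrow> scaleC c x \<in> Domain T"
  using op_scale by blast
lemma dom_zero: "is_op T \<Longrightarrow> 0 \<in> Domain T"
  using op_zero by blast

lemma lin_add: "clinear_on D G \<Longrightarrow> x \<in> D \<Longrightarrow> y \<in> D \<Longrightarrow> G (x + y) = G x + G y"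
  unfolding clinear_on_def by blast
lemma lin_scale: "clinear_on D G \<Longrightarrow> x \<in> D \<Longrightarrow> G (scaleC c x) = scaleC c (G x)"
  unfolding clinear_on_def by blast
lemma lin_zero: "is_op T \<Longrightarrow> clinear_on (Domain T) G \<Longrightarrow> G 0 = 0"
  using lin_scale[of "Domain T" G 0 0] dom_zero[of T] by simp
lemma lin_diff: "is_op T \<Longrightarrow> clinear_on (Domain T) G \<Longrightarrow> x \<in> Domain T \<Longrightarrow> y \<in> Domain T
   \<Longrightarrow> G (x - y) = G x - G y"
  using lin_add[of "Domain T" G x "scaleC (-1) y"] lin_scale[of "Domain T" G y "-1"] dom_scale[of T y "-1"]
  by (simp add: scaleC_neg1)

locale bt =
  fixes T Tt :: "('h::{cinner_space, complete_space} \<times> 'h) set"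
    and G0 G1 Gt0 Gt1 :: "'h \<Rightarrow> 'g::{cinner_space, complete_space}"
    and A0 At0
  assumes A0_def: "A0 = {p \<in> T. G0 (fst p) = 0}"
      and At0_def: "At0 = {p \<in> Tt. Gt0 (fst p) = 0}"
    and T: "is_op T" and Tt: "is_op Tt"
    and lin0: "clinear_on (Domain T) G0" and lint0: "clinear_on (Domain Tt) Gt0"
    and G: "\<And>f u g v. (f, u) \<in> T \<Longrightarrow> (g, v) \<in> Tt \<Longrightarrow>
              cinner u g - cinner f v = cinner (G1 f) (Gt0 g) - cinner (G0 f) (Gt1 g)"
    and D: "closure (G0 ` Domain T) = UNIV"
    and M: "adj A0 = At0" "adj At0 = A0"
begin

lemma A0_iff: "(x,y) \<in> A0 \<longleftrightarrow> (x,y) \<in> T \<and> G0 x = 0"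
  unfolding A0_def by auto
lemma At0_iff: "(x,y) \<in> At0 \<longleftrightarrow> (x,y) \<in> Tt \<and> Gt0 x = 0"
  unfolding At0_def by auto

lemma op_sub:
  assumes "is_op S" "clinear_on (Domain S) H"
  shows "is_op {p \<in> S. H (fst p) = 0}"
  unfolding is_op_def
proof (intro conjI allI impI)
  show "(0, 0) \<in> {p \<in> S. H (fst p) = 0}" using op_zero[OF assms(1)] lin_zero[OF assms] by simp
  fix x y u v
  assume "(x, y) \<in> {p \<in> S. H (fst p) = 0}" "(u, v) \<in> {p \<in> S. H (fst p) = 0}"
  then have a: "(x,y)\<in>S" "H x = 0" "(u,v)\<in>S" "H u = 0" by auto
  then have "H (x+u) = H x + H u" by (intro lin_add[OF assms(2)]) blast+
  then show "(x + u, y + v) \<in> {p \<in> S. H (fst p) = 0}"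
    using op_add[OF assms(1) a(1) a(3)] a by simp
next
  fix c x y assume "(x, y) \<in> {p \<in> S. H (fst p) = 0}"
  then have a: "(x,y)\<in>S" "H x = 0" by auto
  then have "H (scaleC c x) = scaleC c (H x)" by (intro lin_scale[OF assms(2)]) blast
  then show "(scaleC c x, scaleC c y) \<in> {p \<in> S. H (fst p) = 0}"
    using op_scale[OF assms(1) a(1)] a by simp
next
  fix y assume "(0, y) \<in> {p \<in> S. H (fst p) = 0}"
  then show "y = 0" using op_zero_fun[OF assms(1)] by simp
qed

lemma A0_op: "is_op A0" unfolding A0_def by (rule op_sub[OF T lin0])
lemma At0_op: "is_op At0" unfolding At0_def by (rule op_sub[OF Tt lint0])

lemma ker_iff: "f \<in> op_ker (shift_op T l) \<longleftrightarrow> (f, scaleC l f) \<in> T"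
  unfolding op_ker_def shift_op_iff by auto

lemma gamma_iff: "(\<phi>, f) \<in> gamma_field T G0 l \<longleftrightarrow> (f, scaleC l f) \<in> T \<and> \<phi> = G0 f"
  unfolding gamma_field_def ker_iff[symmetric] by auto

lemma gamma_inj:
  assumes l: "l \<in> resolvent_set A0" and f: "(f, scaleC l f) \<in> T" and g0: "G0 f = 0"
  shows "f = 0"
proof -
  have "(f, scaleC l f) \<in> A0" using f g0 by (simp add: A0_iff)
  then have "(f, 0) \<in> shift_op A0 l" unfolding shift_op_iff by force
  then have "resolvent A0 l 0 = f" by (rule res_eq[OF A0_op l])
  moreover have "resolvent A0 l 0 = 0" using res_eq[OF A0_op l op_zero[OF is_op_shift[OF A0_op]]] .
  ultimately show ?thesis by simp
qed

lemma gamma_op: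
  assumes l: "l \<in> resolvent_set A0"
  shows "is_op (gamma_field T G0 l)"
proof -
  have 1: "(0,0) \<in> gamma_field T G0 l"
    unfolding gamma_iff using op_zero[OF T] lin_zero[OF T lin0] by simp
  have 2: "(x+u, y+v) \<in> gamma_field T G0 l"
    if "(x,y) \<in> gamma_field T G0 l" "(u,v) \<in> gamma_field T G0 l" for x y u v
  proof -
    from that have a: "(y, scaleC l y) \<in> T" "x = G0 y" "(v, scaleC l v) \<in> T" "u = G0 v"
      by (auto simp: gamma_iff)
    have "G0 (y + v) = G0 y + G0 v" by (intro lin_add[OF lin0]) (use a in blast)+
    then show ?thesis unfolding gamma_iff using op_add[OF T a(1) a(3)] a
      by (simp add: scaleC_add_right)
  qed
  have 3: "(scaleC c x, scaleC c y) \<in> gamma_field T G0 l" if "(x,y) \<in> gamma_field T G0 l" for c x y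
  proof -
    from that have a: "(y, scaleC l y) \<in> T" "x = G0 y" by (auto simp: gamma_iff)
    have "G0 (scaleC c y) = scaleC c (G0 y)" by (intro lin_scale[OF lin0]) (use a in blast)
    then show ?thesis unfolding gamma_iff using op_scale[OF T a(1), of c] a
      by (simp add: scaleC_scaleC mult.commute)
  qed
  have 4: "y = 0" if "(0,y) \<in> gamma_field T G0 l" for y
    using that gamma_inj[OF l] by (auto simp: gamma_iff)
  show ?thesis unfolding is_op_def using 1 2 3 4 by blast
qed

lemma gamma_decomp:
  assumes l: "l \<in> resolvent_set A0" and fu: "(f,u) \<in> T"
  shows "(G0 f, f - resolvent A0 l (u - scaleC l f)) \<in> gamma_field T G0 l"
proof -
  define h where "h = resolvent A0 l (u - scaleC l f)"
  have hA: "(h, (u - scaleC l f) + scaleC l h) \<in> A0" unfolding h_def by (rule res_A[OF A0_op l])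
  then have hT: "(h, (u - scaleC l f) + scaleC l h) \<in> T" and g0h: "G0 h = 0" by (auto simp: A0_iff)
  have "(f - h, u - ((u - scaleC l f) + scaleC l h)) \<in> T" by (rule op_diff[OF T fu hT])
  moreover have "u - ((u - scaleC l f) + scaleC l h) = scaleC l (f - h)" by (simp add: scaleC_diff_right)
  ultimately have k: "(f - h, scaleC l (f - h)) \<in> T" by simp
  have "G0 (f - h) = G0 f" using lin_diff[OF T lin0] fu hT g0h by (simp add: Domain.DomainI)
  then show ?thesis using k unfolding gamma_iff h_def[symmetric] by simp
qed

lemma gamma_dom: "Domain (gamma_field T G0 l) = G0 ` Domain T" if l: "l \<in> resolvent_set A0"
proof
  show "Domain (gamma_field T G0 l) \<subseteq> G0 ` Domain T"
  proof
    fix \<phi> assume "\<phi> \<in> Domain (gamma_field T G0 l)"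
    then obtain f where "(f, scaleC l f)\<in>T" "\<phi> = G0 f" by (auto simp: gamma_iff)
    then show "\<phi> \<in> G0 ` Domain T" by blast
  qed
  show "G0 ` Domain T \<subseteq> Domain (gamma_field T G0 l)" using gamma_decomp[OF l] by blast
qed

lemma gamma_ran: "Range (gamma_field T G0 l) = op_ker (shift_op T l)"
  by (auto simp: gamma_iff ker_iff)

end

context bt begin

lemma cnj_res: "l \<in> resolvent_set A0 \<Longrightarrow> cnj l \<in> resolvent_set At0"
  by (rule resolvent_adj[OF A0_op At0_op M])

lemma gamma_adj_ident:
  assumes l: "l \<in> resolvent_set A0" and f: "(f, scaleC l f) \<in> T"
  shows "cinner f g = cinner (G0 f) (Gt1 (resolvent At0 (cnj l) g))"
proof -
  let ?k = "resolvent At0 (cnj l) g"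
  have kA: "(?k, g + scaleC (cnj l) ?k) \<in> At0" by (rule res_A[OF At0_op cnj_res[OF l]])
  then have kT: "(?k, g + scaleC (cnj l) ?k) \<in> Tt" and g0: "Gt0 ?k = 0" by (auto simp: At0_iff)
  have "cinner (scaleC l f) ?k - cinner f (g + scaleC (cnj l) ?k)
      = cinner (G1 f) (Gt0 ?k) - cinner (G0 f) (Gt1 ?k)"
    by (rule G[OF f kT])
  then show ?thesis using g0 by (simp add: cinner_scaleC_left cinner_add_right cinner_scaleC_right)
qed

lemma gamma_adj_pair:
  assumes l: "l \<in> resolvent_set A0"
  shows "(g, Gt1 (resolvent At0 (cnj l) g)) \<in> adj (gamma_field T G0 l)"
  unfolding adj_iff gamma_iff using gamma_adj_ident[OF l] by auto

lemma gamma_bounded: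
  assumes l: "l \<in> resolvent_set A0"
  shows "\<exists>C\<ge>0. \<forall>\<phi> x. (\<phi>,x) \<in> gamma_field T G0 l \<longrightarrow> norm x \<le> C * norm \<phi>"
proof -
  let ?\<gamma> = "gamma_field T G0 l"
  let ?F = "\<lambda>g. Gt1 (resolvent At0 (cnj l) g)"
  have id: "cinner x g = cinner \<phi> (?F g)" if "(\<phi>,x) \<in> ?\<gamma>" for \<phi> x g
    using that gamma_adj_ident[OF l] by (auto simp: gamma_iff)
  define E where "E n = {g. \<forall>\<phi> x. (\<phi>,x) \<in> ?\<gamma> \<and> norm \<phi> \<le> 1 \<longrightarrow> cmod (cinner x g) \<le> real n}" for n :: nat
  have Ecl: "closed (E n)" for n
  proof -
    have eq: "E n = (\<Inter>p\<in>{p \<in> ?\<gamma>. norm (fst p) \<le> 1}. {g. cmod (cinner (snd p) g) \<le> real n})"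
      unfolding E_def by fastforce
    have cl: "closed {g. cmod (cinner x g) \<le> real n}" for x :: 'h
      by (intro closed_Collect_le continuous_on_norm cont_cinner_r continuous_on_id continuous_on_const)
    show ?thesis unfolding eq by (rule closed_INT) (blast intro: cl)
  qed
  have Ecover: "\<exists>n. g \<in> E n" for g
  proof -
    obtain n::nat where n: "norm (?F g) \<le> real n" using real_nat_ceiling_ge by blast
    have "g \<in> E n" unfolding E_def
    proof (intro CollectI allI impI, elim conjE)
      fix \<phi> x assume px: "(\<phi>,x) \<in> ?\<gamma>" and p1: "norm \<phi> \<le> 1"
      have "cmod (cinner x g) = cmod (cinner \<phi> (?F g))" using id[OF px] by simp
      also have "\<dots> \<le> norm \<phi> * norm (?F g)" by (rule Cauchy_Schwarz)
      also have "\<dots> \<le> 1 * real n" using p1 n by (intro mult_mono) auto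
      finally show "cmod (cinner x g) \<le> real n" by simp
    qed
    then show ?thesis by blast
  qed
  have "\<exists>n. interior (E n) \<noteq> {}"
  proof (rule ccontr)
    assume "\<not> (\<exists>n. interior (E n) \<noteq> {})"
    then have all: "\<And>n. interior (E n) = {}" by blast
    have "euclidean interior_of \<Union>(range E) = {}"
    proof (rule Baire_category_alt)
      show "completely_metrizable_space (euclidean::'h topology) \<or> locally_compact_space (euclidean::'h topology) \<and> regular_space (euclidean::'h topology)"
        using completely_metrizable_space_euclidean[where 'a='h] by blast
      show "countable (range E)" by simp
      fix S assume "S \<in> range E"
      then obtain m where "S = E m" by blast
      then show "closedin euclidean S \<and> euclidean interior_of S = {}"
        using Ecl[of m] all[of m] closed_closedin by simp
    qed
    moreover have "\<Union>(range E) = UNIV" using Ecover by blast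
    ultimately show False by simp
  qed
  then obtain n y where "y \<in> interior (E n)" by blast
  then obtain r where r0: "r > 0" "ball y r \<subseteq> interior (E n)"
    using open_contains_ball[of "interior (E n)"] open_interior[of "E n"] \<open>y \<in> interior (E n)\<close> by blast
  then have r: "r > 0" "ball y r \<subseteq> E n" using interior_subset[of "E n"] by auto
  have unit: "norm x \<le> 4 * real n / r" if px: "(\<phi>,x) \<in> ?\<gamma>" and p1: "norm \<phi> \<le> 1" for \<phi> x
  proof (cases "x = 0")
    case True then show ?thesis using r by simp
  next
    case False
    then have nx: "norm x > 0" by simp
    define c where "c = r / (2 * norm x)"
    define h where "h = scaleC (complex_of_real c) x"
    have cpos: "c > 0" using nx r by (simp add: c_def)
    have "norm h = c * norm x" using cpos by (simp add: h_def norm_scaleC)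
    then have nh: "norm h = r / 2" using nx by (simp add: c_def)
    have yh: "y + h \<in> E n" using r nh by (intro subsetD[OF r(2)]) (simp add: dist_norm)
    have y: "y \<in> E n" using r by (intro subsetD[OF r(2)]) simp
    have b1: "cmod (cinner x (y + h)) \<le> real n" using yh px p1 unfolding E_def mem_Collect_eq by presburger
    have b2: "cmod (cinner x y) \<le> real n" using y px p1 unfolding E_def mem_Collect_eq by presburger
    have "cinner x h = complex_of_real (c * (norm x)^2)"
      by (simp add: h_def cinner_scaleC_right cinner_self)
    moreover have "c * (norm x)^2 = r / 2 * norm x" using nx by (simp add: c_def power2_eq_square)
    ultimately have "cinner x h = complex_of_real (r / 2 * norm x)" by simp
    then have "cmod (cinner x h) = r / 2 * norm x" using nx r by (simp only: norm_of_real) simp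
    moreover have "cinner x h = cinner x (y + h) - cinner x y" by (simp add: cinner_add_right)
    ultimately have "r / 2 * norm x \<le> cmod (cinner x (y + h)) + cmod (cinner x y)"
      by (metis norm_triangle_ineq4)
    then have "r / 2 * norm x \<le> 2 * real n" using b1 b2 by linarith
    then show ?thesis using r by (simp add: field_simps)
  qed
  have "norm x \<le> (4 * real n / r) * norm \<phi>" if px: "(\<phi>,x) \<in> ?\<gamma>" for \<phi> x
  proof (cases "\<phi> = 0")
    case True
    then have "x = 0" using op_zero_fun[OF gamma_op[OF l]] px by simp
    then show ?thesis using True by simp
  next
    case False
    define s where "s = inverse (norm \<phi>)"
    have sp: "s > 0" using False by (simp add: s_def)
    have "(scaleC (complex_of_real s) \<phi>, scaleC (complex_of_real s) x) \<in> ?\<gamma>"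
      by (rule op_scale[OF gamma_op[OF l] px])
    moreover have "norm (scaleC (complex_of_real s) \<phi>) \<le> 1"
    proof -
      have "norm (scaleC (complex_of_real s) \<phi>) = s * norm \<phi>" using sp by (simp add: norm_scaleC)
      then show ?thesis using False by (simp add: s_def)
    qed
    ultimately have "norm (scaleC (complex_of_real s) x) \<le> 4 * real n / r" by (rule unit)
    then have "s * norm x \<le> 4 * real n / r" using sp by (simp add: norm_scaleC)
    then show ?thesis using False by (simp add: s_def field_simps)
  qed
  moreover have "4 * real n / r \<ge> 0" using r by simp
  ultimately show ?thesis by blast
qed

end

context bt begin

lemma gamma_dense: "l \<in> resolvent_set A0 \<Longrightarrow> closure (Domain (gamma_field T G0 l)) = UNIV"
  using gamma_dom D by simp

lemma gamma_adj_props: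
  assumes l: "l \<in> resolvent_set A0"
  shows "is_op (adj (gamma_field T G0 l)) \<and> Domain (adj (gamma_field T G0 l)) = UNIV
       \<and> bounded_op (adj (gamma_field T G0 l))
       \<and> (\<forall>f. op_app (adj (gamma_field T G0 l)) f = Gt1 (resolvent At0 (cnj l) f))
       \<and> Range (adj (gamma_field T G0 l)) \<subseteq> Gt1 ` Domain Tt"
proof -
  let ?\<gamma> = "gamma_field T G0 l"
  let ?F = "\<lambda>g. Gt1 (resolvent At0 (cnj l) g)"
  have op: "is_op (adj ?\<gamma>)" by (rule adj_is_op[OF gamma_dense[OF l]])
  have pair: "(g, ?F g) \<in> adj ?\<gamma>" for g by (rule gamma_adj_pair[OF l])
  have val: "w = ?F g" if "(g,w) \<in> adj ?\<gamma>" for g w using op_fun[OF op that pair] .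
  have id: "cinner x g = cinner \<phi> (?F g)" if "(\<phi>,x) \<in> ?\<gamma>" for \<phi> x g
    using that gamma_adj_ident[OF l] by (auto simp: gamma_iff)
  obtain C where C0: "C \<ge> 0" and C: "\<And>\<phi> x. (\<phi>,x) \<in> ?\<gamma> \<Longrightarrow> norm x \<le> C * norm \<phi>"
    using gamma_bounded[OF l] by blast
  have Fb: "norm (?F g) \<le> C * norm g" for g
  proof -
    define w where "w = ?F g"
    define S where "S = {\<phi>. cmod (cinner \<phi> w) \<le> C * norm g * norm \<phi>}"
    have Scl: "closed S" unfolding S_def
      by (intro closed_Collect_le continuous_on_norm cont_cinner_l continuous_intros)
    have "Domain ?\<gamma> \<subseteq> S"
    proof
      fix \<phi> assume "\<phi> \<in> Domain ?\<gamma>"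
      then obtain x where px: "(\<phi>,x) \<in> ?\<gamma>" by blast
      have "cmod (cinner \<phi> w) = cmod (cinner x g)" using id[OF px] by (simp add: w_def)
      also have "\<dots> \<le> norm x * norm g" by (rule Cauchy_Schwarz)
      also have "\<dots> \<le> C * norm \<phi> * norm g" using C[OF px] by (simp add: mult_right_mono)
      finally show "\<phi> \<in> S" unfolding S_def by (simp add: algebra_simps)
    qed
    then have "closure (Domain ?\<gamma>) \<subseteq> S" using Scl closure_minimal by blast
    then have "w \<in> S" using gamma_dense[OF l] by auto
    then have "cmod (cinner w w) \<le> C * norm g * norm w" unfolding S_def by simp
    moreover have "cmod (cinner w w) = norm w * norm w"
      by (simp only: cinner_self norm_of_real) (simp add: power2_eq_square)
    ultimately have le: "norm w * norm w \<le> norm w * (C * norm g)"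
      by (simp add: algebra_simps)
    show ?thesis
    proof (cases "norm w = 0")
      case True then show ?thesis using C0 unfolding w_def by simp
    next
      case False then have "norm w > 0" by simp
      then show ?thesis using le unfolding w_def by (simp add: mult_le_cancel_left)
    qed
  qed
  have 1: "Domain (adj ?\<gamma>) = UNIV" using pair by blast
  have 2: "bounded_op (adj ?\<gamma>)" unfolding bounded_op_def using val Fb by blast
  have 3: "\<forall>f. op_app (adj ?\<gamma>) f = ?F f" using op_app_eq[OF op pair] by blast
  have 4: "Range (adj ?\<gamma>) \<subseteq> Gt1 ` Domain Tt"
  proof
    fix w assume "w \<in> Range (adj ?\<gamma>)"
    then obtain g where "(g,w) \<in> adj ?\<gamma>" by blast
    then have "w = ?F g" by (rule val)
    moreover have "resolvent At0 (cnj l) g \<in> Domain Tt"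
      using res_A[OF At0_op cnj_res[OF l], of g] by (auto simp: At0_iff)
    ultimately show "w \<in> Gt1 ` Domain Tt" by blast
  qed
  show ?thesis using op 1 2 3 4 by blast
qed

lemma gamma_shift:
  assumes l: "l \<in> resolvent_set A0" and n: "n \<in> resolvent_set A0"
    and px: "(\<phi>,x) \<in> gamma_field T G0 n"
  shows "(\<phi>, x + scaleC (l - n) (resolvent A0 l x)) \<in> gamma_field T G0 l"
proof -
  define r where "r = resolvent A0 l x"
  from px have xT: "(x, scaleC n x) \<in> T" and \<phi>: "\<phi> = G0 x" by (auto simp: gamma_iff)
  have rA: "(r, x + scaleC l r) \<in> A0" unfolding r_def by (rule res_A[OF A0_op l])
  then have rT: "(r, x + scaleC l r) \<in> T" and g0r: "G0 r = 0" by (auto simp: A0_iff)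
  have "(x + scaleC (l - n) r, scaleC n x + scaleC (l - n) (x + scaleC l r)) \<in> T"
    by (rule op_add[OF T xT op_scale[OF T rT]])
  moreover have "scaleC n x + scaleC (l - n) (x + scaleC l r) = scaleC l (x + scaleC (l - n) r)"
  proof -
    have "scaleC n x + scaleC (l - n) (x + scaleC l r) = (scaleC n x + scaleC (l - n) x) + scaleC ((l - n) * l) r"
      by (simp add: scaleC_add_right scaleC_scaleC add.assoc)
    also have "\<dots> = scaleC l x + scaleC (l * (l - n)) r"
      by (simp add: scaleC_add_left[symmetric] mult.commute)
    also have "\<dots> = scaleC l (x + scaleC (l - n) r)" by (simp add: scaleC_add_right scaleC_scaleC)
    finally show ?thesis .
  qed
  ultimately have yT: "(x + scaleC (l - n) r, scaleC l (x + scaleC (l - n) r)) \<in> T" by simp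
  have xD: "x \<in> Domain T" and rD: "r \<in> Domain T" using xT rT by blast+
  have "G0 (x + scaleC (l - n) r) = G0 x + G0 (scaleC (l - n) r)"
    using lin_add[OF lin0 xD dom_scale[OF T rD]] .
  also have "G0 (scaleC (l - n) r) = scaleC (l - n) (G0 r)" using lin_scale[OF lin0 rD] .
  finally have "G0 (x + scaleC (l - n) r) = G0 x + scaleC (l - n) (G0 r)" .
  then have "G0 (x + scaleC (l - n) r) = \<phi>" using g0r \<phi> by simp
  then show ?thesis using yT unfolding gamma_iff r_def[symmetric] by simp
qed

lemma gamma_formula:
  assumes l: "l \<in> resolvent_set A0" and n: "n \<in> resolvent_set A0"
  shows "gamma_field T G0 l =
         {(\<phi>, x + scaleC (l - n) (resolvent A0 l x)) | \<phi> x. (\<phi>, x) \<in> gamma_field T G0 n}"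
proof
  show "{(\<phi>, x + scaleC (l - n) (resolvent A0 l x)) | \<phi> x. (\<phi>, x) \<in> gamma_field T G0 n} \<subseteq> gamma_field T G0 l"
    using gamma_shift[OF l n] by blast
  show "gamma_field T G0 l \<subseteq> {(\<phi>, x + scaleC (l - n) (resolvent A0 l x)) | \<phi> x. (\<phi>, x) \<in> gamma_field T G0 n}"
  proof
    fix p assume p: "p \<in> gamma_field T G0 l"
    obtain \<phi> y where py: "p = (\<phi>, y)" by (cases p)
    have "\<phi> \<in> Domain (gamma_field T G0 l)" using p py by blast
    then have "\<phi> \<in> Domain (gamma_field T G0 n)" using gamma_dom[OF l] gamma_dom[OF n] by simp
    then obtain x where px: "(\<phi>,x) \<in> gamma_field T G0 n" by blast
    have "(\<phi>, x + scaleC (l - n) (resolvent A0 l x)) \<in> gamma_field T G0 l" by (rule gamma_shift[OF l n px])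
    then have "y = x + scaleC (l - n) (resolvent A0 l x)" using op_fun[OF gamma_op[OF l]] p py by blast
    then show "p \<in> {(\<phi>, x + scaleC (l - n) (resolvent A0 l x)) | \<phi> x. (\<phi>, x) \<in> gamma_field T G0 n}"
      using px py by blast
  qed
qed

end

context bt begin

lemma gamma_holo:
  assumes \<phi>: "\<phi> \<in> G0 ` Domain T"
  shows "vholomorphic_on (\<lambda>l. op_app (gamma_field T G0 l) \<phi>) (resolvent_set A0)"
  unfolding vholomorphic_on_def
proof
  fix z assume z: "z \<in> resolvent_set A0"
  obtain x0 where px0: "(\<phi>, x0) \<in> gamma_field T G0 z" using \<phi> gamma_dom[OF z] by blast
  have fz: "op_app (gamma_field T G0 z) \<phi> = x0" by (rule op_app_eq[OF gamma_op[OF z] px0])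
  obtain C where Cpos: "C > 0" and C: "\<And>y. norm (resolvent A0 z y) \<le> C * norm y"
    using res_bound[OF A0_op z] by blast
  let ?v = "resolvent A0 z x0"
  show "\<exists>v. ((\<lambda>w. scaleC (inverse (w - z)) (op_app (gamma_field T G0 w) \<phi> - op_app (gamma_field T G0 z) \<phi>)) \<longlongrightarrow> v) (at z)"
  proof (intro exI tendstoI)
    fix e :: real assume e: "e > 0"
    define K where "K = 2 * C * C * (norm x0 + 1)"
    have n1: "norm x0 + 1 > 0" by (simp add: add_nonneg_pos)
    have Kpos: "K > 0" unfolding K_def using Cpos n1 by (intro mult_pos_pos) auto
    define d where "d = min (1 / (2 * C)) (e / K)"
    have dpos: "d > 0" using Cpos Kpos e by (simp add: d_def)
    show "eventually (\<lambda>w. dist (scaleC (inverse (w - z)) (op_app (gamma_field T G0 w) \<phi> - op_app (gamma_field T G0 z) \<phi>)) ?v < e) (at z)"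
      unfolding eventually_at
    proof (intro exI[of _ d] conjI ballI impI)
      show "d > 0" by (rule dpos)
      fix w assume "w \<in> UNIV" and wz: "w \<noteq> z \<and> dist w z < d"
      have cw: "cmod (w - z) < d" using wz by (simp add: dist_norm)
      have "cmod (w - z) * C \<le> 1/2"
      proof -
        have "cmod (w - z) * C \<le> 1 / (2 * C) * C" using cw Cpos by (intro mult_right_mono) (auto simp: d_def)
        then show ?thesis using Cpos by simp
      qed
      then have near: "w \<in> resolvent_set A0 \<and> (\<forall>y. norm (resolvent A0 w y) \<le> 2*C*norm y)"
        by (rule resolvent_near[OF A0_op z C Cpos])
      then have w: "w \<in> resolvent_set A0" by blast
      have "(\<phi>, x0 + scaleC (w - z) (resolvent A0 w x0)) \<in> gamma_field T G0 w"
        by (rule gamma_shift[OF w z px0])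
      then have fw: "op_app (gamma_field T G0 w) \<phi> = x0 + scaleC (w - z) (resolvent A0 w x0)"
        by (rule op_app_eq[OF gamma_op[OF w]])
      have wz0: "w - z \<noteq> 0" using wz by simp
      have q: "scaleC (inverse (w - z)) (op_app (gamma_field T G0 w) \<phi> - op_app (gamma_field T G0 z) \<phi>)
            = resolvent A0 w x0"
        unfolding fw fz using wz0 by (simp add: scaleC_scaleC)
      have "resolvent A0 w x0 - ?v = scaleC (w - z) (resolvent A0 z (resolvent A0 w x0))"
        by (rule resolvent_identity[OF A0_op z w])
      then have "dist (resolvent A0 w x0) ?v = cmod (w - z) * norm (resolvent A0 z (resolvent A0 w x0))"
        by (simp add: dist_norm norm_scaleC)
      also have "\<dots> \<le> cmod (w - z) * (C * (2 * C * norm x0))"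
      proof (intro mult_left_mono)
        have "norm (resolvent A0 z (resolvent A0 w x0)) \<le> C * norm (resolvent A0 w x0)" by (rule C)
        also have "\<dots> \<le> C * (2 * C * norm x0)" using near Cpos by (intro mult_left_mono) auto
        finally show "norm (resolvent A0 z (resolvent A0 w x0)) \<le> C * (2 * C * norm x0)" .
      qed simp
      also have "\<dots> \<le> cmod (w - z) * K" unfolding K_def
        using Cpos by (intro mult_left_mono) (auto simp: algebra_simps)
      also have "\<dots> < d * K" using cw Kpos by (intro mult_strict_right_mono)
      also have "\<dots> \<le> e / K * K" using Kpos by (intro mult_right_mono) (auto simp: d_def)
      also have "\<dots> = e" using Kpos by simp
      finally show "dist (scaleC (inverse (w - z)) (op_app (gamma_field T G0 w) \<phi> - op_app (gamma_field T G0 z) \<phi>)) ?v < e"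
        unfolding q .
    qed
  qed
qed

lemma one_side:
  shows "(\<forall>l \<in> resolvent_set A0.
       is_op (gamma_field T G0 l) \<and> bounded_op (gamma_field T G0 l)
       \<and> Domain (gamma_field T G0 l) = G0 ` Domain T
       \<and> densely_defined (gamma_field T G0 l)
       \<and> Range (gamma_field T G0 l) = op_ker (shift_op T l))
  \<and> (\<forall>\<phi> \<in> G0 ` Domain T.
       vholomorphic_on (\<lambda>l. op_app (gamma_field T G0 l) \<phi>) (resolvent_set A0))
  \<and> (\<forall>l \<in> resolvent_set A0. \<forall>n \<in> resolvent_set A0.
       gamma_field T G0 l =
         {(\<phi>, x + scaleC (l - n) (resolvent A0 l x)) | \<phi> x. (\<phi>, x) \<in> gamma_field T G0 n})
  \<and> (\<forall>l \<in> resolvent_set A0.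
       is_op (adj (gamma_field T G0 l)) \<and> Domain (adj (gamma_field T G0 l)) = UNIV
       \<and> bounded_op (adj (gamma_field T G0 l))
       \<and> (\<forall>f. op_app (adj (gamma_field T G0 l)) f = Gt1 (resolvent At0 (cnj l) f))
       \<and> Range (adj (gamma_field T G0 l)) \<subseteq> Gt1 ` Domain Tt)"
proof -
  have i: "is_op (gamma_field T G0 l) \<and> bounded_op (gamma_field T G0 l)
       \<and> Domain (gamma_field T G0 l) = G0 ` Domain T
       \<and> densely_defined (gamma_field T G0 l)
       \<and> Range (gamma_field T G0 l) = op_ker (shift_op T l)" if l: "l \<in> resolvent_set A0" for l
  proof -
    have "bounded_op (gamma_field T G0 l)" unfolding bounded_op_def using gamma_bounded[OF l] by blast
    moreover have "densely_defined (gamma_field T G0 l)"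
      unfolding densely_defined_def by (rule gamma_dense[OF l])
    ultimately show ?thesis using gamma_op[OF l] gamma_dom[OF l] gamma_ran by blast
  qed
  have h1: "\<forall>l \<in> resolvent_set A0.
       is_op (gamma_field T G0 l) \<and> bounded_op (gamma_field T G0 l)
       \<and> Domain (gamma_field T G0 l) = G0 ` Domain T
       \<and> densely_defined (gamma_field T G0 l)
       \<and> Range (gamma_field T G0 l) = op_ker (shift_op T l)" using i by (intro ballI)
  have h2: "\<forall>\<phi> \<in> G0 ` Domain T.
       vholomorphic_on (\<lambda>l. op_app (gamma_field T G0 l) \<phi>) (resolvent_set A0)"
    using gamma_holo by (intro ballI)
  have h3: "\<forall>l \<in> resolvent_set A0. \<forall>n \<in> resolvent_set A0.
       gamma_field T G0 l =
         {(\<phi>, x + scaleC (l - n) (resolvent A0 l x)) | \<phi> x. (\<phi>, x) \<in> gamma_field T G0 n}"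
    using gamma_formula by (intro ballI)
  have h4: "\<forall>l \<in> resolvent_set A0.
       is_op (adj (gamma_field T G0 l)) \<and> Domain (adj (gamma_field T G0 l)) = UNIV
       \<and> bounded_op (adj (gamma_field T G0 l))
       \<and> (\<forall>f. op_app (adj (gamma_field T G0 l)) f = Gt1 (resolvent At0 (cnj l) f))
       \<and> Range (adj (gamma_field T G0 l)) \<subseteq> Gt1 ` Domain Tt"
    using gamma_adj_props by (intro ballI)
  show ?thesis by (intro conjI h1 h2 h3 h4)
qed

end

theorem proposition3p3:
  fixes S St T Tt :: "('h::{cinner_space, complete_space} \<times> 'h) set"
    and G0 G1 Gt0 Gt1 :: "'h \<Rightarrow> 'g::{cinner_space, complete_space}"
  defines "A0 \<equiv> {p \<in> T. G0 (fst p) = 0}"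
      and "At0 \<equiv> {p \<in> Tt. Gt0 (fst p) = 0}"
  assumes separable: "\<exists>D::'h set. countable D \<and> closure D = UNIV"
    and S_op: "is_op S" "closed_op S" "densely_defined S"
    and St_op: "is_op St" "closed_op St" "densely_defined St"
    and adjoint_pair: "\<forall>f u g v. (f, u) \<in> S \<longrightarrow> (g, v) \<in> St \<longrightarrow> cinner u g = cinner f v"
    and T_core: "is_op T" "T \<subseteq> adj S" "closure T = adj S"
    and Tt_core: "is_op Tt" "Tt \<subseteq> adj St" "closure Tt = adj St"
    and lin: "clinear_on (Domain T) G0" "clinear_on (Domain T) G1"
             "clinear_on (Domain Tt) Gt0" "clinear_on (Domain Tt) Gt1"
    and G: "\<forall>f u g v. (f, u) \<in> T \<longrightarrow> (g, v) \<in> Tt \<longrightarrow>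
              cinner u g - cinner f v = cinner (G1 f) (Gt0 g) - cinner (G0 f) (Gt1 g)"
    and D: "closure (G0 ` Domain T) = UNIV" "closure (Gt0 ` Domain Tt) = UNIV"
    and M: "adj A0 = At0" "adj At0 = A0"
    and nonempty: "resolvent_set A0 \<noteq> {}"
  shows
   \<comment> \<open>(i)\<close>
   "(\<forall>l \<in> resolvent_set A0.
       is_op (gamma_field T G0 l) \<and> bounded_op (gamma_field T G0 l)
       \<and> Domain (gamma_field T G0 l) = G0 ` Domain T
       \<and> densely_defined (gamma_field T G0 l)
       \<and> Range (gamma_field T G0 l) = op_ker (shift_op T l))
  \<and> (\<forall>m \<in> resolvent_set At0.
       is_op (gamma_field Tt Gt0 m) \<and> bounded_op (gamma_field Tt Gt0 m)
       \<and> Domain (gamma_field Tt Gt0 m) = Gt0 ` Domain Tt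
       \<and> densely_defined (gamma_field Tt Gt0 m)
       \<and> Range (gamma_field Tt Gt0 m) = op_ker (shift_op Tt m))
   \<comment> \<open>(ii)\<close>
  \<and> (\<forall>\<phi> \<in> G0 ` Domain T.
       vholomorphic_on (\<lambda>l. op_app (gamma_field T G0 l) \<phi>) (resolvent_set A0))
  \<and> (\<forall>\<psi> \<in> Gt0 ` Domain Tt.
       vholomorphic_on (\<lambda>m. op_app (gamma_field Tt Gt0 m) \<psi>) (resolvent_set At0))
  \<and> (\<forall>l \<in> resolvent_set A0. \<forall>n \<in> resolvent_set A0.
       gamma_field T G0 l =
         {(\<phi>, x + scaleC (l - n) (resolvent A0 l x)) | \<phi> x. (\<phi>, x) \<in> gamma_field T G0 n})
  \<and> (\<forall>m \<in> resolvent_set At0. \<forall>w \<in> resolvent_set At0.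
       gamma_field Tt Gt0 m =
         {(\<psi>, x + scaleC (m - w) (resolvent At0 m x)) | \<psi> x. (\<psi>, x) \<in> gamma_field Tt Gt0 w})
   \<comment> \<open>(iii)\<close>
  \<and> (\<forall>l \<in> resolvent_set A0.
       is_op (adj (gamma_field T G0 l)) \<and> Domain (adj (gamma_field T G0 l)) = UNIV
       \<and> bounded_op (adj (gamma_field T G0 l))
       \<and> (\<forall>f. op_app (adj (gamma_field T G0 l)) f = Gt1 (resolvent At0 (cnj l) f))
       \<and> Range (adj (gamma_field T G0 l)) \<subseteq> Gt1 ` Domain Tt)
  \<and> (\<forall>m \<in> resolvent_set At0.
       is_op (adj (gamma_field Tt Gt0 m)) \<and> Domain (adj (gamma_field Tt Gt0 m)) = UNIV
       \<and> bounded_op (adj (gamma_field Tt Gt0 m))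
       \<and> (\<forall>g. op_app (adj (gamma_field Tt Gt0 m)) g = G1 (resolvent A0 (cnj m) g))
       \<and> Range (adj (gamma_field Tt Gt0 m)) \<subseteq> G1 ` Domain T)"
  proof -
  have cnj_cinner: "cnj (cinner a b) = cinner b a" for a b :: 'h
    by (metis cinner_commute complex_cnj_cnj)
  have cnj_cinnerg: "cnj (cinner a b) = cinner b a" for a b :: 'g
    by (metis cinner_commute complex_cnj_cnj)
  have loc1: "bt T Tt G0 G1 Gt0 Gt1 A0 At0"
  proof
    show "A0 = {p \<in> T. G0 (fst p) = 0}" by (simp add: A0_def)
    show "At0 = {p \<in> Tt. Gt0 (fst p) = 0}" by (simp add: At0_def)
    show "is_op T" by (rule T_core(1))
    show "is_op Tt" by (rule Tt_core(1))
    show "clinear_on (Domain T) G0" by (rule lin(1))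
    show "clinear_on (Domain Tt) Gt0" by (rule lin(3))
    show "cinner u g - cinner f v = cinner (G1 f) (Gt0 g) - cinner (G0 f) (Gt1 g)"
      if "(f, u) \<in> T" "(g, v) \<in> Tt" for f u g v using G that by blast
    show "closure (G0 ` Domain T) = UNIV" by (rule D(1))
    show "adj A0 = At0" by (rule M(1))
    show "adj At0 = A0" by (rule M(2))
  qed
  have loc2: "bt Tt T Gt0 Gt1 G0 G1 At0 A0"
  proof
    show "At0 = {p \<in> Tt. Gt0 (fst p) = 0}" by (simp add: At0_def)
    show "A0 = {p \<in> T. G0 (fst p) = 0}" by (simp add: A0_def)
    show "is_op Tt" by (rule Tt_core(1))
    show "is_op T" by (rule T_core(1))
    show "clinear_on (Domain Tt) Gt0" by (rule lin(3))
    show "clinear_on (Domain T) G0" by (rule lin(1))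
    show "cinner u g - cinner f v = cinner (Gt1 f) (G0 g) - cinner (Gt0 f) (G1 g)"
      if fu: "(f, u) \<in> Tt" and gv: "(g, v) \<in> T" for f u g v
    proof -
      have h: "cinner v f - cinner g u = cinner (G1 g) (Gt0 f) - cinner (G0 g) (Gt1 f)"
        using G gv fu by blast
      then have "cnj (cinner v f - cinner g u) = cnj (cinner (G1 g) (Gt0 f) - cinner (G0 g) (Gt1 f))"
        by simp
      then have "cinner f v - cinner u g = cinner (Gt0 f) (G1 g) - cinner (Gt1 f) (G0 g)"
        by (simp only: complex_cnj_diff cnj_cinner cnj_cinnerg)
      then show ?thesis by (metis minus_diff_eq)
    qed
    show "closure (Gt0 ` Domain Tt) = UNIV" by (rule D(2))
    show "adj At0 = A0" by (rule M(2))
    show "adj A0 = At0" by (rule M(1))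
  qed
  note r1 = bt.one_side[OF loc1]
  note r2 = bt.one_side[OF loc2]
  note a1 = conjunct1[OF r1]
  note a2 = conjunct1[OF conjunct2[OF r1]]
  note a3 = conjunct1[OF conjunct2[OF conjunct2[OF r1]]]
  note a4 = conjunct2[OF conjunct2[OF conjunct2[OF r1]]]
  note b1 = conjunct1[OF r2]
  note b2 = conjunct1[OF conjunct2[OF r2]]
  note b3 = conjunct1[OF conjunct2[OF conjunct2[OF r2]]]
  note b4 = conjunct2[OF conjunct2[OF conjunct2[OF r2]]]
  show ?thesis by (intro conjI a1 b1 a2 b2 a3 b3 a4 b4)
qed

end
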